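(* Let $A(\mathbb D)$ be the Banach space of continuous functions on $\overline{\mathbb D}$ holomorphic on $\mathbb D$, with the supremum norm. Then the set Möb, viewed as a subset of $A(\mathbb D)$, is total in $A(\mathbb D)$ (its linear span is dense).
   Context: Möb is the group of biholomorphic automorphisms of the open unit disc $\mathbb D$, i.e. the maps $z\mapsto\beta\frac{z-\alpha}{1-\bar\alpha z}$ with $\alpha\in\mathbb D$, $\beta\in\mathbb T$; each extends continuously to $\overline{\mathbb D}$. *)

theory Defs
  imports "HOL-Complex_Analysis.Complex_Analysis"
begin

definition disc_algebra :: "(complex \<Rightarrow> complex) set" where
  "disc_algebra = {f. continuous_on (cball 0 1) f \<and> f holomorphic_on ball 0 1}"

definition moeb :: "complex \<Rightarrow> complex \<Rightarrow> complex \<Rightarrow> complex" where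
  "moeb \<alpha> \<beta> z = \<beta> * (z - \<alpha>) / (1 - cnj \<alpha> * z)"

definition Moeb :: "(complex \<Rightarrow> complex) set" where
  "Moeb = {moeb \<alpha> \<beta> | \<alpha> \<beta>. \<alpha> \<in> ball 0 1 \<and> cmod \<beta> = 1}"

end

theory Submission
  imports Defs
begin

definition spanM :: "(complex \<Rightarrow> complex) \<Rightarrow> bool" where
  "spanM g \<longleftrightarrow> (\<exists>(n::nat) c \<phi>. (\<forall>i<n. \<phi> i \<in> Moeb) \<and> g = (\<lambda>z. \<Sum>i<n. c i * \<phi> i z))"

definition approxM :: "(complex \<Rightarrow> complex) \<Rightarrow> bool" where
  "approxM g \<longleftrightarrow> (\<forall>e>0. \<exists>h. spanM h \<and> (\<forall>z\<in>cball 0 1. cmod (g z - h z) \<le> e))"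

lemma sum_split_aux: "(\<Sum>i<m+(n::nat). f i) = (\<Sum>i<m. f i) + (\<Sum>i<n. f (m+i))"
  by (induct n) (auto simp: add.assoc)

lemma spanM_0: "spanM (\<lambda>z. 0)"
  unfolding spanM_def by (rule exI[of _ 0]) auto

lemma spanM_moeb: "\<phi> \<in> Moeb \<Longrightarrow> spanM \<phi>"
  unfolding spanM_def
  by (rule exI[of _ 1], rule exI[of _ "\<lambda>_. 1"], rule exI[of _ "\<lambda>_. \<phi>"]) auto

lemma spanM_scale: "spanM g \<Longrightarrow> spanM (\<lambda>z. a * g z)"
  unfolding spanM_def
proof (elim exE conjE)
  fix n :: nat and c :: "nat \<Rightarrow> complex" and \<phi> :: "nat \<Rightarrow> complex \<Rightarrow> complex" assume "\<forall>i<n. \<phi> i \<in> Moeb" "g = (\<lambda>z. \<Sum>i<n. c i * \<phi> i z)"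
  then show "\<exists>(n::nat) c \<phi>. (\<forall>i<n. \<phi> i \<in> Moeb) \<and> (\<lambda>z. a * g z) = (\<lambda>z. \<Sum>i<n. c i * \<phi> i z)"
    by (intro exI[of _ n] exI[of _ "\<lambda>i. a * c i"] exI[of _ \<phi>]) (auto simp: sum_distrib_left mult.assoc)
qed

lemma spanM_add: "spanM g \<Longrightarrow> spanM h \<Longrightarrow> spanM (\<lambda>z. g z + h z)"
  unfolding spanM_def
proof (elim exE conjE)
  fix n1 n2 :: nat and c1 c2 :: "nat \<Rightarrow> complex" and \<phi>1 \<phi>2 :: "nat \<Rightarrow> complex \<Rightarrow> complex"
  assume 1: "\<forall>i<n1. \<phi>1 i \<in> Moeb" "g = (\<lambda>z. \<Sum>i<n1. c1 i * \<phi>1 i z)"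
     and 2: "\<forall>i<n2. \<phi>2 i \<in> Moeb" "h = (\<lambda>z. \<Sum>i<n2. c2 i * \<phi>2 i z)"
  define c where "c i = (if i < n1 then c1 i else c2 (i - n1))" for i
  define \<phi> where "\<phi> i = (if i < n1 then \<phi>1 i else \<phi>2 (i - n1))" for i
  have "(\<lambda>z. g z + h z) = (\<lambda>z. \<Sum>i<n1+n2. c i * \<phi> i z)"
    unfolding sum_split_aux 1 2 c_def \<phi>_def by auto
  moreover have "\<forall>i<n1+n2. \<phi> i \<in> Moeb" using 1 2 by (auto simp: \<phi>_def)
  ultimately show "\<exists>(n::nat) c \<phi>. (\<forall>i<n. \<phi> i \<in> Moeb) \<and> (\<lambda>z. g z + h z) = (\<lambda>z. \<Sum>i<n. c i * \<phi> i z)"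
    by blast
qed

lemma approxM_spanM: "spanM g \<Longrightarrow> approxM g"
  unfolding approxM_def by (intro allI impI exI[of _ g]) auto

lemma approxM_cong: "approxM g \<Longrightarrow> (\<And>z. z \<in> cball 0 1 \<Longrightarrow> g z = g' z) \<Longrightarrow> approxM g'"
  unfolding approxM_def by metis

lemma approxM_limit:
  assumes "\<And>e. e > 0 \<Longrightarrow> \<exists>g. approxM g \<and> (\<forall>z\<in>cball 0 1. cmod (f z - g z) \<le> e)"
  shows "approxM f"
  unfolding approxM_def
proof (intro allI impI)
  fix e :: real assume e: "e > 0"
  obtain g where g: "approxM g" "\<forall>z\<in>cball 0 1. cmod (f z - g z) \<le> e/2"
    using assms[of "e/2"] e by auto
  obtain h where h: "spanM h" "\<forall>z\<in>cball 0 1. cmod (g z - h z) \<le> e/2"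
    using g(1) e unfolding approxM_def by (meson half_gt_zero)
  have "\<forall>z\<in>cball 0 1. cmod (f z - h z) \<le> e"
  proof
    fix z :: complex assume z: "z \<in> cball 0 1"
    have "cmod (f z - h z) \<le> cmod (f z - g z) + cmod (g z - h z)"
      by (metis diff_add_cancel norm_triangle_ineq add_diff_eq)
    then show "cmod (f z - h z) \<le> e" using g(2) h(2) z by fastforce
  qed
  then show "\<exists>h. spanM h \<and> (\<forall>z\<in>cball 0 1. cmod (f z - h z) \<le> e)" using h(1) by blast
qed

lemma approxM_add:
  assumes "approxM f" "approxM g" shows "approxM (\<lambda>z. f z + g z)"
  unfolding approxM_def
proof (intro allI impI)
  fix e :: real assume e: "e > 0"
  obtain h1 where h1: "spanM h1" "\<forall>z\<in>cball 0 1. cmod (f z - h1 z) \<le> e/2"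
    using assms(1) e unfolding approxM_def by (meson half_gt_zero)
  obtain h2 where h2: "spanM h2" "\<forall>z\<in>cball 0 1. cmod (g z - h2 z) \<le> e/2"
    using assms(2) e unfolding approxM_def by (meson half_gt_zero)
  have "\<forall>z\<in>cball 0 1. cmod ((f z + g z) - (h1 z + h2 z)) \<le> e"
  proof
    fix z :: complex assume z: "z \<in> cball 0 1"
    have "cmod ((f z + g z) - (h1 z + h2 z)) \<le> cmod (f z - h1 z) + cmod (g z - h2 z)"
      by (metis add_diff_add norm_triangle_ineq)
    then show "cmod ((f z + g z) - (h1 z + h2 z)) \<le> e" using h1(2) h2(2) z by fastforce
  qed
  then show "\<exists>h. spanM h \<and> (\<forall>z\<in>cball 0 1. cmod (f z + g z - h z) \<le> e)"
    using spanM_add[OF h1(1) h2(1)] by blast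
qed

lemma approxM_scale:
  assumes "approxM f" shows "approxM (\<lambda>z. a * f z)"
proof (cases "a = 0")
  case True
  then show ?thesis using approxM_spanM[OF spanM_0] by simp
next
  case False
  show ?thesis unfolding approxM_def
  proof (intro allI impI)
    fix e :: real assume e: "e > 0"
    then have "e / cmod a > 0" using False by simp
    then obtain h where h: "spanM h" "\<forall>z\<in>cball 0 1. cmod (f z - h z) \<le> e / cmod a"
      using assms unfolding approxM_def by blast
    have "\<forall>z\<in>cball 0 1. cmod (a * f z - a * h z) \<le> e"
    proof
      fix z :: complex assume z: "z \<in> cball 0 1"
      have "cmod (a * f z - a * h z) = cmod a * cmod (f z - h z)"
        by (metis norm_mult right_diff_distrib)
      also have "\<dots> \<le> cmod a * (e / cmod a)" using h(2) z by (intro mult_left_mono) auto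
      also have "\<dots> = e" using False by simp
      finally show "cmod (a * f z - a * h z) \<le> e" .
    qed
    then show "\<exists>h. spanM h \<and> (\<forall>z\<in>cball 0 1. cmod (a * f z - h z) \<le> e)"
      using spanM_scale[OF h(1)] by blast
  qed
qed

lemma approxM_diff:
  assumes "approxM f" "approxM g" shows "approxM (\<lambda>z. f z - g z)"
  using approxM_add[OF assms(1) approxM_scale[OF assms(2), of "-1"]] by simp

lemma approxM_sum:
  "(\<And>i. i \<in> A \<Longrightarrow> approxM (f i)) \<Longrightarrow> approxM (\<lambda>z. \<Sum>i\<in>A. f i z)"
proof (induct A rule: infinite_finite_induct)
  case (infinite A) then show ?case using approxM_spanM[OF spanM_0] by simp
next
  case empty then show ?case using approxM_spanM[OF spanM_0] by simp
next
  case (insert x F)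
  then show ?case using approxM_add[of "f x" "\<lambda>z. \<Sum>i\<in>F. f i z"] by simp
qed


lemma approxM_moeb: "cmod \<alpha> < 1 \<Longrightarrow> approxM (moeb \<alpha> 1)"
  by (rule approxM_spanM, rule spanM_moeb) (unfold Moeb_def, force)

lemma approxM_param:
  fixes F :: "real \<Rightarrow> complex \<Rightarrow> complex"
  assumes cont: "continuous_on ({0..d} \<times> cball 0 1) (\<lambda>p. F (fst p) (snd p))"
    and d: "d > 0" and ap: "\<And>t. 0 < t \<Longrightarrow> t \<le> d \<Longrightarrow> approxM (F t)"
  shows "approxM (F 0)"
proof (rule approxM_limit)
  fix e :: real assume e: "e > 0"
  obtain X0 where X0: "0 \<in> X0" "open X0"
    "\<forall>x\<in>X0 \<inter> {0..d}. \<forall>z\<in>cball 0 1. dist (F x z) (F 0 z) \<le> e"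
    using continuous_on_prod_compactE[OF cont compact_cball _ e, of 0] d by auto
  obtain r where r: "r > 0" "ball 0 r \<subseteq> X0" using X0 open_contains_ball by blast
  define t where "t = min d (r/2)"
  have t: "0 < t" "t \<le> d" "t \<in> X0" using r d by (auto simp: t_def intro!: r(2)[THEN subsetD])
  have "\<forall>z\<in>cball 0 1. cmod (F 0 z - F t z) \<le> e"
  proof
    fix z :: complex assume z: "z \<in> cball 0 1"
    have "cmod (F t z - F 0 z) \<le> e" using X0(3) t z by (auto simp: dist_norm)
    then show "cmod (F 0 z - F t z) \<le> e" by (simp add: norm_minus_commute)
  qed
  then show "\<exists>g. approxM g \<and> (\<forall>z\<in>cball 0 1. cmod (F 0 z - g z) \<le> e)"
    using ap[OF t(1,2)] by blast
qed

lemma nz_aux: "cmod z \<le> 1 \<Longrightarrow> cmod b < 1 \<Longrightarrow> 1 - b * z \<noteq> 0"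
proof
  assume "cmod z \<le> 1" "cmod b < 1" "1 - b * z = 0"
  then have "cmod (b * z) = 1" by (metis eq_iff_diff_eq_0 norm_one)
  moreover have "cmod (b * z) < 1" using \<open>cmod z \<le> 1\<close> \<open>cmod b < 1\<close>
    by (simp add: norm_mult) (metis mult_le_one norm_ge_zero less_le_trans mult_strict_right_mono
        mult_left_le not_le mult.commute)
  ultimately show False by simp
qed

lemma alg1:
  fixes a z :: complex
  assumes "a \<noteq> 0" "1 - a * z \<noteq> 0" "1 + a * z \<noteq> 0"
  shows "(1 / (4 * a)) * ((z + a) / (1 + a * z) - (z - a) / (1 - a * z)) = (1 - z^2) / (1 - a^2 * z^2) / 2"
proof -
  have e: "1 - a^2 * z^2 = (1 - a * z) * (1 + a * z)" by (simp add: algebra_simps power2_eq_square)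
  have nz: "1 - a^2 * z^2 \<noteq> 0" unfolding e using assms by simp
  have 1: "(z + a) / (1 + a * z) - (z - a) / (1 - a * z)
      = ((z + a) * (1 - a * z) - (z - a) * (1 + a * z)) / ((1 + a * z) * (1 - a * z))"
    using assms by (simp add: diff_frac_eq)
  have 2: "(z + a) * (1 - a * z) - (z - a) * (1 + a * z) = 2 * a * (1 - z^2)"
    by (simp add: algebra_simps power2_eq_square)
  have 3: "(1 + a * z) * (1 - a * z) = 1 - a^2 * z^2"
    by (simp add: algebra_simps power2_eq_square)
  show ?thesis unfolding 1 2 3 using assms(1) nz
    by (simp add: field_simps)
qed

lemma alg2:
  fixes a z :: complex
  assumes "a \<noteq> 0" "1 - a * z \<noteq> 0" "1 + a * z \<noteq> 0"
  shows "(1 / (4 * a)) * ((z + a) / (1 - a * z) - (z - a) / (1 + a * z)) = (1 + z^2) / (1 - a^2 * z^2) / 2"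
proof -
  have e: "1 - a^2 * z^2 = (1 - a * z) * (1 + a * z)" by (simp add: algebra_simps power2_eq_square)
  have nz: "1 - a^2 * z^2 \<noteq> 0" unfolding e using assms by simp
  have 1: "(z + a) / (1 - a * z) - (z - a) / (1 + a * z)
      = ((z + a) * (1 + a * z) - (z - a) * (1 - a * z)) / ((1 - a * z) * (1 + a * z))"
    using assms by (simp add: diff_frac_eq)
  have 2: "(z + a) * (1 + a * z) - (z - a) * (1 - a * z) = 2 * a * (1 + z^2)"
    by (simp add: algebra_simps power2_eq_square)
  have 3: "(1 - a * z) * (1 + a * z) = 1 - a^2 * z^2"
    by (simp add: algebra_simps power2_eq_square)
  show ?thesis unfolding 1 2 3 using assms(1) nz
    by (simp add: field_simps)
qed

lemma approxM_const: "approxM (\<lambda>z. 1)"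
proof -
  define F where "F t z = (1 - z^2) / (1 - (complex_of_real t)^2 * z^2) / 2
                          + (1 + z^2) / (1 + (complex_of_real t)^2 * z^2) / 2" for t z
  have "approxM (F 0)"
  proof (rule approxM_param[of "1/2"])
    have "(complex_of_real t)^2 * z^2 \<noteq> 1 \<and> (complex_of_real t)^2 * z^2 \<noteq> -1"
      if "t \<in> {0..1/2}" "z \<in> cball 0 1" for t z
    proof -
      have a: "t^2 \<le> (1/2)^2" using that by (intro power_mono) auto
      have b: "(cmod z)^2 \<le> 1" using that by (simp add: power_le_one)
      have "cmod ((complex_of_real t)^2 * z^2) = t^2 * (cmod z)^2" by (simp add: norm_mult norm_power)
      also have "\<dots> \<le> (1/2)^2 * 1" using a b by (intro mult_mono) auto
      finally have "cmod ((complex_of_real t)^2 * z^2) \<le> 1/4" by (simp add: power2_eq_square)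
      then show ?thesis by auto
    qed
    then show "continuous_on ({0..1/2} \<times> cball 0 1) (\<lambda>p. F (fst p) (snd p))"
      unfolding F_def
      by (intro continuous_intros) (auto simp: add_eq_0_iff)
  next
    fix t :: real assume t: "0 < t" "t \<le> 1/2"
    define a where "a = complex_of_real t"
    define b where "b = \<i> * complex_of_real t"
    let ?m1 = "moeb a 1" and ?m2 = "moeb (- a) 1"
    let ?m3 = "moeb b 1" and ?m4 = "moeb (- b) 1"
    have ap: "approxM ?m1" "approxM ?m2" "approxM ?m3" "approxM ?m4"
      using t by (auto intro!: approxM_moeb simp: norm_mult a_def b_def)
    have A: "approxM (\<lambda>z. (1 / (4 * a)) * (?m2 z - ?m1 z)
               + (1 / (4 * b)) * (?m4 z - ?m3 z))"
      by (intro approxM_add approxM_scale approxM_diff ap)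
    show "approxM (F t)"
    proof (rule approxM_cong[OF A])
      fix z :: complex assume z: "z \<in> cball 0 1"
      have n1: "1 - a * z \<noteq> 0" "1 + a * z \<noteq> 0"
        "1 - b * z \<noteq> 0" "1 + b * z \<noteq> 0"
        using nz_aux[of z "a"] nz_aux[of z "- a"]
          nz_aux[of z "b"] nz_aux[of z "- b"] z t
        by (auto simp: norm_mult a_def b_def)
      have ab: "a \<noteq> 0" "b \<noteq> 0" using t by (auto simp: a_def b_def)
      have m: "?m1 z = (z - a) / (1 - a * z)" "?m2 z = (z + a) / (1 + a * z)"
        "?m3 z = (z - b) / (1 + b * z)" "?m4 z = (z + b) / (1 - b * z)"
        by (auto simp: moeb_def a_def b_def)
      have sq: "b^2 = - (a^2)" by (simp add: a_def b_def power_mult_distrib)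
      show "(1 / (4 * a)) * (?m2 z - ?m1 z) + (1 / (4 * b)) * (?m4 z - ?m3 z) = F t z"
        unfolding m alg1[OF ab(1) n1(1,2)] alg2[OF ab(2) n1(3,4)] F_def sq
        by (simp add: a_def)
    qed
  qed (auto)
  then show ?thesis by (rule approxM_cong) (auto simp: F_def field_simps)
qed


lemma approxM_kernel:
  assumes b: "cmod b < 1" shows "approxM (\<lambda>z. 1 / (1 - b * z))"
proof (cases "b = 0")
  case True then show ?thesis using approxM_const by simp
next
  case False
  have nb: "1 - b * cnj b \<noteq> 0"
  proof
    assume "1 - b * cnj b = 0"
    then have "complex_of_real ((cmod b)^2) = 1" by (metis complex_norm_square eq_iff_diff_eq_0)
    then have "(cmod b)^2 = 1" by (metis of_real_eq_1_iff)
    with b show False by (simp add: power_less_one_iff abs_square_eq_1)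
  qed
  have A: "approxM (\<lambda>z. (b / (1 - b * cnj b)) * moeb (cnj b) 1 z + (1 / (1 - b * cnj b)) * 1)"
    using b by (intro approxM_add approxM_scale approxM_moeb approxM_const) auto
  show ?thesis
  proof (rule approxM_cong[OF A])
    fix z :: complex assume z: "z \<in> cball 0 1"
    have nz: "1 - b * z \<noteq> 0" using nz_aux[of z b] z b by auto
    show "(b / (1 - b * cnj b)) * moeb (cnj b) 1 z + (1 / (1 - b * cnj b)) * 1 = 1 / (1 - b * z)"
    proof -
      define D where "D = 1 - b * cnj b"
      have Dnz: "D \<noteq> 0" using nb by (simp add: D_def)
      have "(b / D) * moeb (cnj b) 1 z + (1 / D) * 1
          = (b * (z - cnj b)) / (D * (1 - b * z)) + (1 - b * z) / (D * (1 - b * z))"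
        unfolding moeb_def using nz Dnz by simp
      also have "\<dots> = (b * (z - cnj b) + (1 - b * z)) / (D * (1 - b * z))"
        by (rule add_divide_distrib[symmetric])
      also have "b * (z - cnj b) + (1 - b * z) = D" by (simp add: D_def algebra_simps)
      also have "D / (D * (1 - b * z)) = 1 / (1 - b * z)" using Dnz nz by simp
      finally show ?thesis by (simp add: D_def)
    qed
  qed
qed

lemma fac_nz: "cmod z \<le> 1 \<Longrightarrow> 0 \<le> t \<Longrightarrow> real j * t < 1 \<Longrightarrow> 1 - complex_of_real (real j * t) * z \<noteq> 0"
proof -
  assume a: "cmod z \<le> 1" "0 \<le> t" "real j * t < 1"
  have "cmod (complex_of_real (real j * t)) < 1" unfolding norm_of_real using a by auto
  then show ?thesis using nz_aux a(1) by blast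
qed

definition Qf :: "real \<Rightarrow> nat \<Rightarrow> nat \<Rightarrow> complex \<Rightarrow> complex" where
  "Qf t n s z = z^n / (\<Prod>j\<in>{s..s+n}. (1 - complex_of_real (real j * t) * z))"

lemma approxM_Q: "t > 0 \<Longrightarrow> real (s+n) * t < 1 \<Longrightarrow> approxM (Qf t n s)"
proof (induct n arbitrary: s)
  case 0
  have "approxM (\<lambda>z. 1 / (1 - complex_of_real (real s * t) * z))"
    using 0 by (intro approxM_kernel, unfold norm_of_real) auto
  then show ?case by (simp add: Qf_def)
next
  case (Suc n)
  have h1: "approxM (Qf t n (Suc s))"
  proof -
    have "Suc s + n = s + Suc n" by simp
    then show ?thesis using Suc.hyps[of "Suc s"] Suc.prems by metis
  qed
  have h0: "approxM (Qf t n s)"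
  proof (rule Suc.hyps)
    have "real (s + n) * t \<le> real (s + Suc n) * t" using Suc.prems by (intro mult_right_mono) auto
    then show "real (s + n) * t < 1" using Suc.prems by linarith
  qed (use Suc in auto)
  define c where "c = 1 / complex_of_real (real (Suc n) * t)"
  have A: "approxM (\<lambda>z. c * (Qf t n (Suc s) z - Qf t n s z))"
    by (intro approxM_scale approxM_diff h0 h1)
  show ?case
  proof (rule approxM_cong[OF A])
    fix z :: complex assume z: "z \<in> cball 0 1"
    define a where "a j = 1 - complex_of_real (real j * t) * z" for j
    have anz: "a j \<noteq> 0" if "j \<le> s + Suc n" for j
    proof -
      have "real j * t \<le> real (s + Suc n) * t" using that Suc.prems by (intro mult_right_mono) auto
      then have jt: "real j * t < 1" using Suc.prems by linarith
      show ?thesis unfolding a_def by (rule fac_nz) (use z Suc.prems jt in auto)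
    qed
    define P where "P = prod a {s..s + Suc n}"
    define P1 where "P1 = prod a {Suc s..Suc s + n}"
    define P0 where "P0 = prod a {s..s + n}"
    have s1: "{s..s + Suc n} = insert s {Suc s..Suc s + n}" by auto
    have s0: "{s..s + Suc n} = insert (Suc (s + n)) {s..s + n}" by auto
    have PP1: "P = a s * P1" unfolding P_def P1_def s1 by (subst prod.insert) auto
    have PP0: "P = a (Suc (s + n)) * P0" unfolding P_def P0_def s0 by (subst prod.insert) auto
    have Pnz: "P \<noteq> 0" unfolding P_def using anz by (auto simp: prod_zero_iff)
    have P1nz: "P1 \<noteq> 0" and P0nz: "P0 \<noteq> 0" and asnz: "a s \<noteq> 0" and anz2: "a (Suc (s + n)) \<noteq> 0"
      using Pnz PP1 PP0 by auto
    have "Qf t n (Suc s) z - Qf t n s z = z^n / P1 - z^n / P0"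
      by (simp add: Qf_def P1_def P0_def a_def)
    also have "\<dots> = z^n * a s / P - z^n * a (Suc (s + n)) / P"
    proof -
      have "z^n / P1 = z^n * a s / P" using asnz by (simp add: PP1)
      moreover have "z^n / P0 = z^n * a (Suc (s + n)) / P" using anz2 by (simp add: PP0)
      ultimately show ?thesis by simp
    qed
    also have "\<dots> = z^n * (a s - a (Suc (s + n))) / P"
      by (simp add: diff_divide_distrib right_diff_distrib)
    also have "a s - a (Suc (s + n)) = complex_of_real (real (Suc n) * t) * z"
      by (simp add: a_def algebra_simps)
    finally have "Qf t n (Suc s) z - Qf t n s z = complex_of_real (real (Suc n) * t) * (z ^ Suc n / P)"
      using Pnz by (simp add: field_simps)
    moreover have "complex_of_real (real (Suc n) * t) \<noteq> 0"
    proof -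
      have "real (Suc n) * t \<noteq> 0" using Suc.prems by simp
      then show ?thesis by (simp only: of_real_eq_0_iff not_False_eq_True)
    qed
    ultimately show "c * (Qf t n (Suc s) z - Qf t n s z) = Qf t (Suc n) s z"
      by (simp add: c_def Qf_def P_def a_def)
  qed
qed

lemma approxM_monom: "approxM (\<lambda>z. z ^ n)"
proof -
  define d where "d = 1 / (2 * (real n + 1))"
  have d: "d > 0" "real n * d < 1" by (auto simp: d_def field_simps)
  have "approxM (\<lambda>z. Qf 0 n 0 z)"
  proof (rule approxM_param[of d])
    have "(\<Prod>j\<in>{0..n}. (1 - complex_of_real (real j * t) * z)) \<noteq> 0"
      if tz: "t \<in> {0..d}" "z \<in> cball 0 1" for t z
    proof -
      have "1 - complex_of_real (real j * t) * z \<noteq> 0" if j: "j \<in> {0..n}" for j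
      proof (rule fac_nz)
        have "real j * t \<le> real n * d" using that j \<open>t \<in> {0..d}\<close> by (intro mult_mono) auto
        then show "real j * t < 1" using d by linarith
      qed (use tz in auto)
      then show ?thesis by (auto simp: prod_zero_iff)
    qed
    then show "continuous_on ({0..d} \<times> cball 0 1) (\<lambda>p. Qf (fst p) n 0 (snd p))"
      unfolding Qf_def by (intro continuous_intros) auto
  next
    fix t :: real assume t: "0 < t" "t \<le> d"
    have "real n * t \<le> real n * d" using t by (intro mult_left_mono) auto
    then show "approxM (Qf t n 0)" using t d by (intro approxM_Q) auto
  qed (use d in auto)
  then show ?thesis by (simp add: Qf_def)
qed

lemma approxM_poly: "approxM (\<lambda>z. \<Sum>k<N. c k * z ^ k)"
  by (intro approxM_sum approxM_scale approxM_monom)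


lemma approxM_disc:
  assumes "f \<in> disc_algebra" shows "approxM f"
proof (rule approxM_limit)
  fix e :: real assume e: "e > 0"
  have cont: "continuous_on (cball 0 1) f" and hol: "f holomorphic_on ball 0 1"
    using assms by (auto simp: disc_algebra_def)
  have uc: "uniformly_continuous_on (cball 0 1) f"
    by (rule compact_uniformly_continuous[OF cont compact_cball])
  obtain d where d: "d > 0" "\<forall>x\<in>cball 0 1. \<forall>x'\<in>cball 0 1. dist x' x < d \<longrightarrow> dist (f x') (f x) < e/2"
    using uc e unfolding uniformly_continuous_on_def by (meson half_gt_zero)
  define r where "r = max (1/2) (1 - d/2)"
  have r: "0 < r" "r < 1" "1 - r < d" using d by (auto simp: r_def)
  define a where "a n = (deriv ^^ n) f 0 / fact n" for n
  have ser: "(\<lambda>n. a n * w ^ n) sums f w" if "cmod w < 1" for w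
    using holomorphic_power_series[OF hol, of w] that by (simp add: a_def)
  define r' where "r' = (1 + r) / 2"
  have r': "r < r'" "r' < 1" using r by (auto simp: r'_def)
  have "summable (\<lambda>n. a n * complex_of_real r' ^ n)"
    using ser[of "complex_of_real r'"] r r' by (auto simp: sums_iff)
  then have sM: "summable (\<lambda>n. norm (a n * complex_of_real r ^ n))"
    by (rule powser_insidea) (use r r' in auto)
  define M where "M n = norm (a n * complex_of_real r ^ n)" for n
  have sMM: "summable M" using sM by (simp add: M_def[abs_def])
  obtain N where N: "\<forall>n\<ge>N. norm (\<Sum>i. M (i + n)) < e/2"
    using suminf_exist_split[OF _ sMM, of "e/2"] e by auto
  define p where "p z = (\<Sum>k<N. (a k * complex_of_real r ^ k) * z ^ k)" for z
  have "approxM p" unfolding p_def by (rule approxM_poly)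
  moreover have "\<forall>z\<in>cball 0 1. cmod (f z - p z) \<le> e"
  proof
    fix z :: complex assume z: "z \<in> cball 0 1"
    have rz: "complex_of_real r * z \<in> cball 0 1" "cmod (complex_of_real r * z) < 1"
      using z r by (auto simp: norm_mult intro: mult_le_one le_less_trans[of _ r]
          mult_left_le[of "cmod z" r])
    have "dist (complex_of_real r * z) z = (1 - r) * cmod z"
    proof -
      have "complex_of_real r * z - z = complex_of_real (r - 1) * z" by (simp add: algebra_simps)
      then have "dist (complex_of_real r * z) z = \<bar>r - 1\<bar> * cmod z"
        by (simp only: dist_norm norm_mult norm_of_real)
      then show ?thesis using r by simp
    qed
    also have "\<dots> \<le> 1 - r" using z r by (auto intro: mult_left_le)
    finally have "dist (complex_of_real r * z) z < d" using r by linarith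
    then have c1: "cmod (f (complex_of_real r * z) - f z) < e/2"
      using d(2) z rz by (auto simp: dist_norm)
    have S: "(\<lambda>n. a n * (complex_of_real r * z) ^ n) sums f (complex_of_real r * z)"
      by (rule ser) (use rz in auto)
    have bnd: "norm (a n * (complex_of_real r * z) ^ n) \<le> M n" for n
    proof -
      have "cmod z ^ n \<le> 1" using z by (auto intro: power_le_one)
      then show ?thesis unfolding M_def
        by (simp add: norm_mult norm_power power_mult_distrib)
          (intro mult_left_mono mult_right_le_one_le, auto)
    qed
    have sT: "summable (\<lambda>n. norm (a n * (complex_of_real r * z) ^ n))"
      by (rule summable_comparison_test[OF _ sM]) (use bnd M_def in auto)
    have "f (complex_of_real r * z) - p z = (\<Sum>i. a (i + N) * (complex_of_real r * z) ^ (i + N))"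
      using suminf_minus_initial_segment[OF summable_norm_cancel[OF sT], of N] S
      by (simp add: sums_iff p_def power_mult_distrib mult.assoc)
    also have "cmod \<dots> \<le> (\<Sum>i. norm (a (i + N) * (complex_of_real r * z) ^ (i + N)))"
      by (rule summable_norm) (use summable_ignore_initial_segment[OF sT, of N] in simp)
    also have "\<dots> \<le> (\<Sum>i. M (i + N))"
      by (rule suminf_le) (use bnd summable_ignore_initial_segment[OF sT, of N]
          summable_ignore_initial_segment[OF sM, of N] M_def in auto)
    also have "\<dots> < e/2"
    proof -
      have "norm (\<Sum>i. M (i + N)) < e/2" using N by blast
      then show ?thesis unfolding real_norm_def by linarith
    qed
    finally have c2: "cmod (f (complex_of_real r * z) - p z) < e/2" .
    have "cmod (f z - p z) \<le> cmod (f (complex_of_real r * z) - f z) + cmod (f (complex_of_real r * z) - p z)"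
    proof -
      have eq: "f z - p z = (f (complex_of_real r * z) - p z) - (f (complex_of_real r * z) - f z)" by simp
      show ?thesis unfolding eq using norm_triangle_ineq4[of "f (complex_of_real r * z) - p z" "f (complex_of_real r * z) - f z"]
        by (metis add.commute)
    qed
    then show "cmod (f z - p z) \<le> e" using c1 c2 by linarith
  qed
  ultimately show "\<exists>g. approxM g \<and> (\<forall>z\<in>cball 0 1. cmod (f z - g z) \<le> e)" by blast
qed

theorem lemma4p6:
  fixes f :: "complex \<Rightarrow> complex" and \<epsilon> :: real
  assumes "f \<in> disc_algebra" and "\<epsilon> > 0"
  shows "\<exists>(n::nat) (c :: nat \<Rightarrow> complex) (\<phi> :: nat \<Rightarrow> complex \<Rightarrow> complex).
           (\<forall>i<n. \<phi> i \<in> Moeb) \<and>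
           (\<forall>z\<in>cball 0 1. cmod (f z - (\<Sum>i<n. c i * \<phi> i z)) \<le> \<epsilon>)"
proof -
  obtain h where h: "spanM h" "\<forall>z\<in>cball 0 1. cmod (f z - h z) \<le> \<epsilon>"
    using approxM_disc[OF assms(1)] assms(2) unfolding approxM_def by blast
  obtain n :: nat and c \<phi> where "\<forall>i<n. \<phi> i \<in> Moeb" "h = (\<lambda>z. \<Sum>i<n. c i * \<phi> i z)"
    using h(1) unfolding spanM_def by blast
  then show ?thesis using h(2) by blast
qed

end
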